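(* Let $\mathcal M$ be a finite polyptych lattice over $F$. The product $\star$ on $\langle\mathcal M\rangle$ (defined below) is associative and commutative; in particular $(m_1\star m_2)\star m_3=m_1\star(m_2\star m_3)$ in $\langle\mathcal M\rangle$ for all $m_1,m_2,m_3\in\mathcal M$.
   Context: Fix a subring $F$ with $\mathbb Z\subseteq F\subseteq\mathbb R$. A polyptych lattice of rank $r$ over $F$ is a collection $\{M_\alpha\}_{\alpha\in I}$ of free $F$-modules of rank $r$ with piecewise $F$-linear maps (continuous and $F$-linear on each cone of some complete $F$-rational fan) $\mu_{\alpha,\beta}:M_\alpha\to M_\beta$ with $\mu_{\alpha,\alpha}=\mathrm{id}$, $\mu_{\alpha,\beta}=\mu_{\beta,\alpha}^{-1}$, $\mu_{\beta,\gamma}\circ\mu_{\alpha,\beta}=\mu_{\alpha,\gamma}$; finite if $I$ is finite. Elements are classes of $\bigsqcup M_\alpha$ under $m_\alpha\sim\mu_{\alpha,\beta}(m_\alpha)$; $\pi_\alpha$ the chart maps; $\mathcal M_{\mathbb R}$ has charts $M_\alpha\otimes\mathbb R$; $m+_\alpha m':=\pi_\alpha^{-1}(\pi_\alpha(m)+\pi_\alpha(m'))$; $\lambda m:=\pi_\alpha^{-1}(\lambda\pi_\alpha(m))$ ($\lambda\ge0$). A point is $p:\mathcal M\to F$ with $p(m)+p(m')=\min_\alpha p(m+_\alpha m')$, $p(\lambda m)=\lambda p(m)$ ($\lambda\in F_{\ge 0}$), extended continuously and piecewise linearly to $\mathcal M_{\mathbb R}$; $\mathrm{Sp}(\mathcal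 M)$ is the set of points. For $p\in\mathrm{Sp}(\mathcal M)$, $a\in F$, the PL half-space is $\mathcal H_{p,a}=\{m\in\mathcal M_{\mathbb R}:p(m)\ge a\}$; the point-convex hull over $F$ of $S\subseteq\mathcal M_{\mathbb R}$ is $\mathrm{p\text{-}conv}_F(S)=\bigcap\{\mathcal H_{p,a}: p\in\mathrm{Sp}(\mathcal M),a\in F, S\subseteq\mathcal H_{p,a}\}$. $\langle\mathcal M\rangle$ is the free commutative idempotent semigroup (operation $\oplus$) on the elements of $\mathcal M$ modulo the relations $\bigoplus_{m\in S}m=\bigoplus_{m\in S'}m$ for finite $S,S'\subseteq\mathcal M$ with $\mathrm{p\text{-}conv}_F(S)=\mathrm{p\text{-}conv}_F(S')$, with a formally adjoined additive identity $\infty$. The product is $m_1\star m_2:=\bigoplus_{\alpha\in I}(m_1+_\alpha m_2)$ for $m_1,m_2\in\mathcal M$, $m\star\infty=\infty$, extended by distributivity over $\oplus$. *)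

theory Defs
  imports "HOL-Analysis.Analysis"
begin

text \<open>A free F-module of rank r is modelled as the set of
  F-points of real^'n (r = CARD('n)), i.e. a basis has been chosen in each chart.
  The index set I of the (finite) polyptych lattice is a finite type 'i.
  The maps mu a b are given by their (unique) continuous piecewise-linear
  extensions to the real charts real^'n = M_a tensor R.\<close>

definition F_subring :: "real set \<Rightarrow> bool" where
  "F_subring F \<longleftrightarrow> \<int> \<subseteq> F \<and> (\<forall>x\<in>F. \<forall>y\<in>F. x + y \<in> F \<and> x - y \<in> F \<and> x * y \<in> F)"

definition Fvec :: "real set \<Rightarrow> (real^'n) set" where
  "Fvec F = {v. \<forall>j. v $ j \<in> F}"

definition rational_cone :: "real set \<Rightarrow> (real^'n) set \<Rightarrow> bool" where
  "rational_cone F c \<longleftrightarrow> (\<exists>V. finite V \<and> V \<subseteq> Fvec F \<and>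
      c = {\<Sum>v\<in>V. u v *\<^sub>R v | u. \<forall>v\<in>V. 0 \<le> u v})"

definition complete_fan :: "real set \<Rightarrow> (real^'n) set set \<Rightarrow> bool" where
  "complete_fan F C \<longleftrightarrow> finite C \<and> (\<forall>c\<in>C. rational_cone F c)
     \<and> (\<forall>c\<in>C. \<forall>d. d face_of c \<and> d \<noteq> {} \<longrightarrow> d \<in> C)
     \<and> (\<forall>c\<in>C. \<forall>d\<in>C. (c \<inter> d) face_of c \<and> (c \<inter> d) face_of d)
     \<and> \<Union>C = UNIV"

definition pw_F_linear :: "real set \<Rightarrow> (real^'n \<Rightarrow> real^'n) \<Rightarrow> bool" where
  "pw_F_linear F f \<longleftrightarrow> continuous_on UNIV f \<and> f ` Fvec F \<subseteq> Fvec F \<and>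
     (\<exists>C. complete_fan F C \<and>
        (\<forall>c\<in>C. \<exists>A::real^'n^'n. (\<forall>i j. A $ i $ j \<in> F) \<and> (\<forall>x\<in>c. f x = A *v x)))"

definition polyptych ::
  "real set \<Rightarrow> ('i::finite \<Rightarrow> 'i \<Rightarrow> real^'n \<Rightarrow> real^'n) \<Rightarrow> bool" where
  "polyptych F \<mu> \<longleftrightarrow> F_subring F \<and> (\<forall>a b. pw_F_linear F (\<mu> a b))
     \<and> (\<forall>a. \<mu> a a = id)
     \<and> (\<forall>a b. \<mu> a b \<circ> \<mu> b a = id)
     \<and> (\<forall>a b c. \<mu> b c \<circ> \<mu> a b = \<mu> a c)"

text \<open>Elements of M_R: compatible families of chart coordinates.\<close>
definition MR :: "('i::finite \<Rightarrow> 'i \<Rightarrow> real^'n \<Rightarrow> real^'n) \<Rightarrow> ('i \<Rightarrow> real^'n) set" where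
  "MR \<mu> = {m. \<forall>a b. m b = \<mu> a b (m a)}"

definition Mset :: "real set \<Rightarrow> ('i::finite \<Rightarrow> 'i \<Rightarrow> real^'n \<Rightarrow> real^'n) \<Rightarrow> ('i \<Rightarrow> real^'n) set" where
  "Mset F \<mu> = {m \<in> MR \<mu>. \<forall>a. m a \<in> Fvec F}"

definition chart_inv :: "('i::finite \<Rightarrow> 'i \<Rightarrow> real^'n \<Rightarrow> real^'n) \<Rightarrow> 'i \<Rightarrow> real^'n \<Rightarrow> ('i \<Rightarrow> real^'n)" where
  "chart_inv \<mu> a v = (\<lambda>b. \<mu> a b v)"

definition padd :: "('i::finite \<Rightarrow> 'i \<Rightarrow> real^'n \<Rightarrow> real^'n) \<Rightarrow> 'i \<Rightarrow> ('i \<Rightarrow> real^'n) \<Rightarrow> ('i \<Rightarrow> real^'n) \<Rightarrow> ('i \<Rightarrow> real^'n)" where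
  "padd \<mu> a m m' = chart_inv \<mu> a (m a + m' a)"

text \<open>Points: F-valued on M, min-additive, F_{>=0}-homogeneous, with a continuous
  piecewise-linear extension to M_R (p is given directly on M_R).\<close>
definition is_point :: "real set \<Rightarrow> ('i::finite \<Rightarrow> 'i \<Rightarrow> real^'n \<Rightarrow> real^'n) \<Rightarrow> (('i \<Rightarrow> real^'n) \<Rightarrow> real) \<Rightarrow> bool" where
  "is_point F \<mu> p \<longleftrightarrow>
     (\<forall>m\<in>Mset F \<mu>. p m \<in> F)
   \<and> (\<forall>m\<in>Mset F \<mu>. \<forall>m'\<in>Mset F \<mu>. p m + p m' = Min (range (\<lambda>a. p (padd \<mu> a m m'))))
   \<and> (\<forall>m\<in>Mset F \<mu>. \<forall>l\<in>F. 0 \<le> l \<longrightarrow> (\<forall>a. p (chart_inv \<mu> a (l *\<^sub>R m a)) = l * p m))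
   \<and> (\<forall>a. continuous_on UNIV (\<lambda>v. p (chart_inv \<mu> a v)) \<and>
        (\<exists>C. complete_fan UNIV C \<and> (\<forall>c\<in>C. \<exists>w. \<forall>v\<in>c. p (chart_inv \<mu> a v) = w \<bullet> v)))"

definition halfspace :: "('i::finite \<Rightarrow> 'i \<Rightarrow> real^'n \<Rightarrow> real^'n) \<Rightarrow> (('i \<Rightarrow> real^'n) \<Rightarrow> real) \<Rightarrow> real \<Rightarrow> ('i \<Rightarrow> real^'n) set" where
  "halfspace \<mu> p t = {m \<in> MR \<mu>. t \<le> p m}"

definition pconv :: "real set \<Rightarrow> ('i::finite \<Rightarrow> 'i \<Rightarrow> real^'n \<Rightarrow> real^'n) \<Rightarrow> ('i \<Rightarrow> real^'n) set \<Rightarrow> ('i \<Rightarrow> real^'n) set" where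
  "pconv F \<mu> S = {m \<in> MR \<mu>. \<forall>p t. is_point F \<mu> p \<and> t \<in> F \<and> S \<subseteq> halfspace \<mu> p t \<longrightarrow> m \<in> halfspace \<mu> p t}"

text \<open>The free commutative idempotent semigroup on M is modelled by finite nonempty
  subsets of M under union; mrel is the congruence generated by the p-conv relations.\<close>
inductive mrel :: "real set \<Rightarrow> ('i::finite \<Rightarrow> 'i \<Rightarrow> real^'n \<Rightarrow> real^'n) \<Rightarrow> ('i \<Rightarrow> real^'n) set \<Rightarrow> ('i \<Rightarrow> real^'n) set \<Rightarrow> bool"
  for F \<mu> where
  base: "\<lbrakk>finite S; finite S'; S \<noteq> {}; S' \<noteq> {}; S \<subseteq> Mset F \<mu>; S' \<subseteq> Mset F \<mu>;
          pconv F \<mu> S = pconv F \<mu> S'\<rbrakk> \<Longrightarrow> mrel F \<mu> S S'"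
| refl: "\<lbrakk>finite S; S \<noteq> {}; S \<subseteq> Mset F \<mu>\<rbrakk> \<Longrightarrow> mrel F \<mu> S S"
| sym: "mrel F \<mu> S S' \<Longrightarrow> mrel F \<mu> S' S"
| trans: "mrel F \<mu> S S' \<Longrightarrow> mrel F \<mu> S' S'' \<Longrightarrow> mrel F \<mu> S S''"
| cong: "\<lbrakk>mrel F \<mu> S S'; finite T; T \<noteq> {}; T \<subseteq> Mset F \<mu>\<rbrakk> \<Longrightarrow> mrel F \<mu> (S \<union> T) (S' \<union> T)"

text \<open>Representatives of elements of <M>: None is the adjoined identity infinity,
  Some S stands for the oplus-sum of the elements of S.\<close>
definition angle_elem :: "real set \<Rightarrow> ('i::finite \<Rightarrow> 'i \<Rightarrow> real^'n \<Rightarrow> real^'n) \<Rightarrow> ('i \<Rightarrow> real^'n) set option \<Rightarrow> bool" where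
  "angle_elem F \<mu> x \<longleftrightarrow> x = None \<or> (\<exists>S. x = Some S \<and> finite S \<and> S \<noteq> {} \<and> S \<subseteq> Mset F \<mu>)"

definition angle_eq :: "real set \<Rightarrow> ('i::finite \<Rightarrow> 'i \<Rightarrow> real^'n \<Rightarrow> real^'n) \<Rightarrow> ('i \<Rightarrow> real^'n) set option \<Rightarrow> ('i \<Rightarrow> real^'n) set option \<Rightarrow> bool" where
  "angle_eq F \<mu> x y \<longleftrightarrow> (x = None \<and> y = None) \<or> (\<exists>S T. x = Some S \<and> y = Some T \<and> mrel F \<mu> S T)"

text \<open>The product, extended by distributivity over oplus; infinity is absorbing.\<close>
definition star :: "('i::finite \<Rightarrow> 'i \<Rightarrow> real^'n \<Rightarrow> real^'n) \<Rightarrow> ('i \<Rightarrow> real^'n) set option \<Rightarrow> ('i \<Rightarrow> real^'n) set option \<Rightarrow> ('i \<Rightarrow> real^'n) set option" where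
  "star \<mu> x y = (case (x, y) of (Some S, Some T) \<Rightarrow> Some {padd \<mu> a s t | a s t. s \<in> S \<and> t \<in> T} | _ \<Rightarrow> None)"

end

theory Submission
  imports Defs
begin

definition PP :: "('i::finite \<Rightarrow> 'i \<Rightarrow> real^'n \<Rightarrow> real^'n) \<Rightarrow> ('i \<Rightarrow> real^'n) set \<Rightarrow> ('i \<Rightarrow> real^'n) set \<Rightarrow> ('i \<Rightarrow> real^'n) set" where
  "PP \<mu> X Y = {padd \<mu> a s t | a s t. s \<in> X \<and> t \<in> Y}"

lemma star_Some: "star \<mu> (Some X) (Some Y) = Some (PP \<mu> X Y)"
  by (simp add: star_def PP_def)

lemma padd_Mset:
  assumes P: "polyptych F \<mu>" and s: "s \<in> Mset F \<mu>" and t: "t \<in> Mset F \<mu>"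
  shows "padd \<mu> a s t \<in> Mset F \<mu>"
proof -
  have comp: "\<And>b c v. \<mu> b c (\<mu> a b v) = \<mu> a c v"
    using P unfolding polyptych_def by (metis comp_apply)
  have sub: "F_subring F" using P unfolding polyptych_def by blast
  have "s a + t a \<in> Fvec F" using s t sub unfolding Mset_def Fvec_def F_subring_def by auto
  moreover have "\<And>b. \<mu> a b ` Fvec F \<subseteq> Fvec F" using P unfolding polyptych_def pw_F_linear_def by blast
  ultimately have "\<And>b. \<mu> a b (s a + t a) \<in> Fvec F" by blast
  then show ?thesis using comp
    unfolding Mset_def MR_def padd_def chart_inv_def by auto
qed

lemma PP_Mset:
  assumes "polyptych F \<mu>" "X \<subseteq> Mset F \<mu>" "Y \<subseteq> Mset F \<mu>"
  shows "PP \<mu> X Y \<subseteq> Mset F \<mu>"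
  using padd_Mset[OF assms(1)] assms(2,3) unfolding PP_def by blast

lemma PP_finite:
  assumes "finite X" "finite Y"
  shows "finite (PP \<mu> X Y)"
proof -
  have "PP \<mu> X Y = (\<lambda>(a,s,t). padd \<mu> a s t) ` (UNIV \<times> X \<times> Y)"
    unfolding PP_def image_def by fastforce
  then show ?thesis using assms by simp
qed

lemma PP_ne: "X \<noteq> {} \<Longrightarrow> Y \<noteq> {} \<Longrightarrow> PP \<mu> X Y \<noteq> {}"
  unfolding PP_def by blast

lemma PP_comm: "PP \<mu> X Y = PP \<mu> Y X"
  unfolding PP_def padd_def by (metis (no_types, lifting) add.commute)

lemma point_le:
  assumes "is_point F \<mu> p" "m \<in> Mset F \<mu>" "m' \<in> Mset F \<mu>"
  shows "p m + p m' \<le> p (padd \<mu> a m m')"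
proof -
  have "p m + p m' = Min (range (\<lambda>a. p (padd \<mu> a m m')))"
    using assms unfolding is_point_def by blast
  also have "\<dots> \<le> p (padd \<mu> a m m')" by (rule Min_le) auto
  finally show ?thesis .
qed

lemma point_ex:
  assumes "is_point F \<mu> p" "m \<in> Mset F \<mu>" "m' \<in> Mset F \<mu>"
  shows "\<exists>a. p (padd \<mu> a m m') = p m + p m'"
proof -
  have "p m + p m' = Min (range (\<lambda>a. p (padd \<mu> a m m')))"
    using assms unfolding is_point_def by blast
  moreover have "Min (range (\<lambda>a. p (padd \<mu> a m m'))) \<in> range (\<lambda>a. p (padd \<mu> a m m'))"
    by (rule Min_in) auto
  ultimately show ?thesis by (metis (no_types, lifting) imageE)
qed

lemma PP_bound:
  assumes "is_point F \<mu> p" "X \<subseteq> Mset F \<mu>" "Y \<subseteq> Mset F \<mu>"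
  shows "(\<forall>z\<in>PP \<mu> X Y. c \<le> p z) \<longleftrightarrow> (\<forall>x\<in>X. \<forall>y\<in>Y. c \<le> p x + p y)"
proof
  assume h: "\<forall>z\<in>PP \<mu> X Y. c \<le> p z"
  show "\<forall>x\<in>X. \<forall>y\<in>Y. c \<le> p x + p y"
  proof (intro ballI)
    fix x y assume "x \<in> X" "y \<in> Y"
    then obtain a where "p (padd \<mu> a x y) = p x + p y"
      using point_ex[OF assms(1)] assms(2,3) by blast
    moreover have "padd \<mu> a x y \<in> PP \<mu> X Y" using \<open>x\<in>X\<close> \<open>y\<in>Y\<close> unfolding PP_def by blast
    ultimately show "c \<le> p x + p y" using h by force
  qed
next
  assume h: "\<forall>x\<in>X. \<forall>y\<in>Y. c \<le> p x + p y"
  show "\<forall>z\<in>PP \<mu> X Y. c \<le> p z"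
  proof
    fix z assume "z \<in> PP \<mu> X Y"
    then obtain a x y where z: "z = padd \<mu> a x y" "x \<in> X" "y \<in> Y" unfolding PP_def by blast
    then have "p x + p y \<le> p z" using point_le[OF assms(1)] assms(2,3) by blast
    then show "c \<le> p z" using h z by force
  qed
qed

lemma PP3_bound:
  assumes "polyptych F \<mu>" "is_point F \<mu> p" "X \<subseteq> Mset F \<mu>" "Y \<subseteq> Mset F \<mu>" "Z \<subseteq> Mset F \<mu>"
  shows "(\<forall>w\<in>PP \<mu> (PP \<mu> X Y) Z. c \<le> p w) \<longleftrightarrow> (\<forall>x\<in>X. \<forall>y\<in>Y. \<forall>z\<in>Z. c \<le> p x + p y + p z)"
proof -
  have "(\<forall>w\<in>PP \<mu> (PP \<mu> X Y) Z. c \<le> p w) \<longleftrightarrow> (\<forall>v\<in>PP \<mu> X Y. \<forall>z\<in>Z. c \<le> p v + p z)"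
    using PP_bound[OF assms(2) PP_Mset[OF assms(1,3,4)] assms(5)] .
  also have "\<dots> \<longleftrightarrow> (\<forall>z\<in>Z. \<forall>v\<in>PP \<mu> X Y. c - p z \<le> p v)" by (auto simp: diff_le_eq)
  also have "\<dots> \<longleftrightarrow> (\<forall>z\<in>Z. \<forall>x\<in>X. \<forall>y\<in>Y. c - p z \<le> p x + p y)"
    using PP_bound[OF assms(2,3,4)] by simp
  finally show ?thesis by (auto simp: diff_le_eq)
qed

lemma halfspace_iff:
  "A \<subseteq> MR \<mu> \<Longrightarrow> (A \<subseteq> halfspace \<mu> p c) \<longleftrightarrow> (\<forall>w\<in>A. c \<le> p w)"
  unfolding halfspace_def by auto

lemma assoc_pconv:
  assumes P: "polyptych F \<mu>" and X: "X \<subseteq> Mset F \<mu>" and Y: "Y \<subseteq> Mset F \<mu>" and Z: "Z \<subseteq> Mset F \<mu>"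
  shows "pconv F \<mu> (PP \<mu> (PP \<mu> X Y) Z) = pconv F \<mu> (PP \<mu> X (PP \<mu> Y Z))"
proof -
  have MM: "Mset F \<mu> \<subseteq> MR \<mu>" unfolding Mset_def by auto
  have A: "PP \<mu> (PP \<mu> X Y) Z \<subseteq> MR \<mu>"
    using PP_Mset[OF P PP_Mset[OF P X Y] Z] MM by blast
  have B: "PP \<mu> X (PP \<mu> Y Z) \<subseteq> MR \<mu>"
    using PP_Mset[OF P X PP_Mset[OF P Y Z]] MM by blast
  have B': "PP \<mu> X (PP \<mu> Y Z) = PP \<mu> (PP \<mu> Z Y) X"
    by (simp add: PP_comm)
  have "\<And>p c. is_point F \<mu> p \<Longrightarrow>
     (PP \<mu> (PP \<mu> X Y) Z \<subseteq> halfspace \<mu> p c) = (PP \<mu> X (PP \<mu> Y Z) \<subseteq> halfspace \<mu> p c)"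
  proof -
    fix p c assume pt: "is_point F \<mu> p"
    show "(PP \<mu> (PP \<mu> X Y) Z \<subseteq> halfspace \<mu> p c) = (PP \<mu> X (PP \<mu> Y Z) \<subseteq> halfspace \<mu> p c)"
      unfolding B' halfspace_iff[OF A] halfspace_iff[OF B[unfolded B']]
      unfolding PP3_bound[OF P pt X Y Z] PP3_bound[OF P pt Z Y X]
      by (metis (no_types, lifting) add.commute add.left_commute)
  qed
  then show ?thesis unfolding pconv_def by blast
qed

theorem mainTheorem6:
  fixes F :: "real set" and \<mu> :: "'i::finite \<Rightarrow> 'i \<Rightarrow> real^'n \<Rightarrow> real^'n"
  assumes "polyptych F \<mu>"
  shows "(\<forall>x y. angle_elem F \<mu> x \<and> angle_elem F \<mu> y \<longrightarrow>
            angle_eq F \<mu> (star \<mu> x y) (star \<mu> y x))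
       \<and> (\<forall>x y z. angle_elem F \<mu> x \<and> angle_elem F \<mu> y \<and> angle_elem F \<mu> z \<longrightarrow>
            angle_eq F \<mu> (star \<mu> (star \<mu> x y) z) (star \<mu> x (star \<mu> y z)))"
proof (intro conjI allI impI)
  fix x y assume h: "angle_elem F \<mu> x \<and> angle_elem F \<mu> y"
  show "angle_eq F \<mu> (star \<mu> x y) (star \<mu> y x)"
  proof (cases "x = None \<or> y = None")
    case True then show ?thesis by (auto simp: angle_eq_def star_def split: option.splits)
  next
    case False
    then obtain S T where st: "x = Some S" "y = Some T" "finite S" "S \<noteq> {}" "S \<subseteq> Mset F \<mu>"
      "finite T" "T \<noteq> {}" "T \<subseteq> Mset F \<mu>" using h unfolding angle_elem_def by auto
    have "mrel F \<mu> (PP \<mu> S T) (PP \<mu> S T)"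
      by (rule mrel.refl) (use st PP_finite[of S T] PP_ne[of S T] PP_Mset[OF assms, of S T] in auto)
    then show ?thesis using st by (simp add: angle_eq_def star_Some PP_comm)
  qed
next
  fix x y z assume h: "angle_elem F \<mu> x \<and> angle_elem F \<mu> y \<and> angle_elem F \<mu> z"
  show "angle_eq F \<mu> (star \<mu> (star \<mu> x y) z) (star \<mu> x (star \<mu> y z))"
  proof (cases "x = None \<or> y = None \<or> z = None")
    case True then show ?thesis by (auto simp: angle_eq_def star_def split: option.splits)
  next
    case False
    then obtain S T U where st: "x = Some S" "y = Some T" "z = Some U" "finite S" "S \<noteq> {}" "S \<subseteq> Mset F \<mu>"
      "finite T" "T \<noteq> {}" "T \<subseteq> Mset F \<mu>" "finite U" "U \<noteq> {}" "U \<subseteq> Mset F \<mu>"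
      using h unfolding angle_elem_def by auto
    have "mrel F \<mu> (PP \<mu> (PP \<mu> S T) U) (PP \<mu> S (PP \<mu> T U))"
    proof (rule mrel.base)
      show "finite (PP \<mu> (PP \<mu> S T) U)" "finite (PP \<mu> S (PP \<mu> T U))"
        using st by (simp_all add: PP_finite)
      show "PP \<mu> (PP \<mu> S T) U \<noteq> {}" "PP \<mu> S (PP \<mu> T U) \<noteq> {}"
        using st by (simp_all add: PP_ne)
      show "PP \<mu> (PP \<mu> S T) U \<subseteq> Mset F \<mu>" "PP \<mu> S (PP \<mu> T U) \<subseteq> Mset F \<mu>"
        using st by (simp_all add: PP_Mset[OF assms])
      show "pconv F \<mu> (PP \<mu> (PP \<mu> S T) U) = pconv F \<mu> (PP \<mu> S (PP \<mu> T U))"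
        using st assoc_pconv[OF assms] by simp
    qed
    then show ?thesis using st by (simp add: angle_eq_def star_Some)
  qed
qed

end
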